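(* Let $f(x)=\sum_{i=0}^{n-1}a_ix^{q^i}\in\mathbb{F}_{q^n}[x]$ and let $A$ be its Dickson matrix. If $A$ is reducible, then $f$ is $\mathbb{F}_{q^d}$-linear for some divisor $d>1$ of $n$.
   Context: The Dickson matrix of $f$ is the $n\times n$ matrix indexed by $\mathbb{Z}_n$ with $A[i|j]=a_{j-i}^{q^i}$ (indices mod $n$). An $n\times n$ matrix $A$ is reducible if there is a partition $\{\alpha,\beta\}$ of $\mathbb{Z}_n$ into nonempty sets with $A[\alpha|\beta]$ the zero matrix ($A[\alpha|\beta]$ = submatrix with rows $\alpha$, columns $\beta$). *)

theory Defs
  imports "HOL-Computational_Algebra.Primes"
begin

text \<open>The field F_{q^n} is modelled by a finite field type 'a with CARD('a) = q^n.
 A q-polynomial f(x) = sum_{i<n} a_i x^{q^i} is given by its coefficient function a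
 (only a 0, ..., a (n-1) are used).\<close>

definition qpoly :: "nat \<Rightarrow> nat \<Rightarrow> (nat \<Rightarrow> 'a::field) \<Rightarrow> 'a \<Rightarrow> 'a" where
  "qpoly q n a x = (\<Sum>i<n. a i * x ^ (q ^ i))"

definition dickson_matrix :: "nat \<Rightarrow> nat \<Rightarrow> (nat \<Rightarrow> 'a::field) \<Rightarrow> nat \<Rightarrow> nat \<Rightarrow> 'a" where
  "dickson_matrix q n a i j = (a (nat ((int j - int i) mod int n))) ^ (q ^ i)"

definition reducible_matrix :: "nat \<Rightarrow> (nat \<Rightarrow> nat \<Rightarrow> 'a::zero) \<Rightarrow> bool" where
  "reducible_matrix n A \<longleftrightarrow>
     (\<exists>\<alpha> \<beta>. \<alpha> \<union> \<beta> = {..<n} \<and> \<alpha> \<inter> \<beta> = {} \<and> \<alpha> \<noteq> {} \<and> \<beta> \<noteq> {} \<and>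
        (\<forall>i\<in>\<alpha>. \<forall>j\<in>\<beta>. A i j = 0))"

definition subfield_qd :: "nat \<Rightarrow> nat \<Rightarrow> 'a::field set" where
  "subfield_qd q d = {c. c ^ (q ^ d) = c}"

definition linear_over :: "'a::field set \<Rightarrow> ('a \<Rightarrow> 'a) \<Rightarrow> bool" where
  "linear_over K f \<longleftrightarrow> (\<forall>x y. f (x + y) = f x + f y) \<and> (\<forall>c\<in>K. \<forall>x. f (c * x) = c * f x)"

end

theory Submission
  imports Defs "HOL-Number_Theory.Residues"
begin

definition clos :: "nat \<Rightarrow> nat set \<Rightarrow> nat \<Rightarrow> bool" where
  "clos n A m \<longleftrightarrow> (\<forall>x\<in>A. (x + m) mod n \<in> A)"

lemma clos_add: "clos n A s \<Longrightarrow> clos n A t \<Longrightarrow> clos n A (s + t)"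
  unfolding clos_def
proof
  fix x assume s: "\<forall>x\<in>A. (x + s) mod n \<in> A" and t: "\<forall>x\<in>A. (x + t) mod n \<in> A" and x: "x \<in> A"
  have "((x + s) mod n + t) mod n \<in> A" using s t x by blast
  moreover have "((x + s) mod n + t) mod n = (x + (s + t)) mod n"
    by (simp add: mod_add_left_eq add.assoc)
  ultimately show "(x + (s + t)) mod n \<in> A" by simp
qed

lemma clos_zero: "A \<subseteq> {..<n} \<Longrightarrow> clos n A 0"
  unfolding clos_def by auto

lemma clos_mult: "A \<subseteq> {..<n} \<Longrightarrow> clos n A s \<Longrightarrow> clos n A (k * s)"
  by (induction k) (auto simp: clos_zero intro: clos_add)

lemma clos_n: "A \<subseteq> {..<n} \<Longrightarrow> clos n A n"
  unfolding clos_def by auto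

lemma clos_cancel: "clos n A (g + n * k) \<Longrightarrow> clos n A g"
  unfolding clos_def
proof
  fix x assume h: "\<forall>x\<in>A. (x + (g + n * k)) mod n \<in> A" and x: "x \<in> A"
  have "(x + (g + n * k)) mod n = (x + g) mod n"
    by (metis add.assoc mod_mult_self1 mult.commute)
  then show "(x + g) mod n \<in> A" using h x by metis
qed

lemma clos_gcd:
  assumes A: "A \<subseteq> {..<n}" and n: "n \<ge> 1" and s: "clos n A s" and t: "clos n A t"
  shows "clos n A (gcd s t)"
proof (cases "s = 0")
  case True then show ?thesis using t by simp
next
  case False
  then obtain x y where xy: "s * x = t * y + gcd s t" using bezout_nat by blast
  have c1: "clos n A (x * s)" using clos_mult[OF A s] .
  have c2: "clos n A ((n - 1) * y * t)" using clos_mult[OF A t] .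
  have "clos n A (x * s + (n - 1) * y * t)" using clos_add[OF c1 c2] .
  moreover have "x * s + (n - 1) * y * t = gcd s t + n * (t * y)"
  proof -
    have "x * s + (n - 1) * y * t = t * y + gcd s t + (n - 1) * (t * y)"
      using xy by (simp add: mult.commute mult.left_commute)
    also have "\<dots> = gcd s t + (1 + (n - 1)) * (t * y)" by (simp add: algebra_simps)
    also have "1 + (n - 1) = n" using n by simp
    finally show ?thesis .
  qed
  ultimately show ?thesis using clos_cancel by metis
qed

lemma clos_Gcd:
  assumes A: "A \<subseteq> {..<n}" and n: "n \<ge> 1" and F: "finite F" "\<forall>s\<in>F. clos n A s"
  shows "clos n A (Gcd (insert n F))"
  using F
proof (induction F rule: finite_induct)
  case empty then show ?case using clos_n[OF A] by simp
next
  case (insert s F)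
  have "Gcd (insert n (insert s F)) = gcd s (Gcd (insert n F))"
    by (metis Gcd_insert gcd.left_commute insert_commute)
  then show ?case using clos_gcd[OF A n] insert by simp
qed

lemma pow_fix:
  fixes c :: "'a::field"
  assumes "c ^ (q ^ d) = c"
  shows "c ^ (q ^ (d * m)) = c"
proof (induction m)
  case 0 then show ?case by simp
next
  case (Suc m)
  have "c ^ (q ^ (d * Suc m)) = (c ^ (q ^ (d * m))) ^ (q ^ d)"
  proof -
    have "q ^ (d * Suc m) = q ^ (d * m) * q ^ d" by (simp add: power_add)
    then show ?thesis by (metis power_mult)
  qed
  then show ?case using Suc assms by simp
qed

theorem mainTheorem8:
  fixes q n :: nat and a :: "nat \<Rightarrow> 'a::{field,finite}"
  assumes "\<exists>p k. prime p \<and> k > 0 \<and> q = p ^ k"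
    and "n \<ge> 1"
    and "card (UNIV :: 'a set) = q ^ n"
    and "reducible_matrix n (dickson_matrix q n a)"
  shows "\<exists>d. d dvd n \<and> d > 1 \<and> linear_over (subfield_qd q d) (qpoly q n a)"
proof -
  obtain p k where p: "prime p" and k: "k > 0" and q: "q = p ^ k" using assms(1) by blast
  obtain \<alpha> \<beta> where un: "\<alpha> \<union> \<beta> = {..<n}" and dis: "\<alpha> \<inter> \<beta> = {}" and an: "\<alpha> \<noteq> {}"
    and bn: "\<beta> \<noteq> {}" and zero: "\<forall>i\<in>\<alpha>. \<forall>j\<in>\<beta>. dickson_matrix q n a i j = 0"
    using assms(4) unfolding reducible_matrix_def by blast
  have A: "\<alpha> \<subseteq> {..<n}" using un by blast
  have n1: "n \<ge> 1" using assms(2) .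
  define S where "S = {s. s < n \<and> a s \<noteq> 0}"
  have finS: "finite S" unfolding S_def by simp
  have closS: "\<forall>s\<in>S. clos n \<alpha> s"
  proof
    fix s assume "s \<in> S"
    then have sn: "s < n" and as: "a s \<noteq> 0" unfolding S_def by auto
    show "clos n \<alpha> s" unfolding clos_def
    proof
      fix i assume i: "i \<in> \<alpha>"
      define j where "j = (i + s) mod n"
      have jn: "j < n" unfolding j_def using n1 by simp
      have "j \<notin> \<beta>"
      proof
        assume "j \<in> \<beta>"
        then have "dickson_matrix q n a i j = 0" using zero i by blast
        moreover have "(int j - int i) mod int n = int s"
        proof -
          have "int j = (int i + int s) mod int n" unfolding j_def by (metis of_nat_add of_nat_mod)
          then have "(int j - int i) mod int n = ((int i + int s) - int i) mod int n"
            by (simp add: mod_diff_left_eq)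
          also have "\<dots> = int s" using sn by simp
          finally show ?thesis .
        qed
        ultimately have "a s ^ (q ^ i) = 0" unfolding dickson_matrix_def by simp
        then show False using as by simp
      qed
      then show "(i + s) mod n \<in> \<alpha>" using jn un unfolding j_def[symmetric] by blast
    qed
  qed
  define d where "d = Gcd (insert n S)"
  have cd: "clos n \<alpha> d" unfolding d_def using clos_Gcd[OF A n1 finS closS] .
  have ddvd: "d dvd n" unfolding d_def by simp
  have ddvdS: "\<And>s. s \<in> S \<Longrightarrow> d dvd s" unfolding d_def by (rule Gcd_dvd) simp
  have d0: "d \<noteq> 0" using ddvd n1 by (metis dvd_0_left_iff not_one_le_zero)
  have d1: "d \<noteq> 1"
  proof
    assume "d = 1"
    then have c1: "clos n \<alpha> 1" using cd by simp
    obtain i0 where i0: "i0 \<in> \<alpha>" using an by blast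
    obtain j where j: "j \<in> \<beta>" using bn by blast
    have jn: "j < n" using j un by blast
    have i0n: "i0 < n" using i0 A by blast
    have "clos n \<alpha> ((n - i0 + j) * 1)" using clos_mult[OF A c1] .
    then have "clos n \<alpha> (n - i0 + j)" by (simp only: mult_1_right)
    then have "(i0 + (n - i0 + j)) mod n \<in> \<alpha>" using i0 unfolding clos_def by blast
    moreover have e1: "i0 + (n - i0 + j) = j + n" using i0n by linarith
    have e2: "(j + n) mod n = j" using jn by simp
    ultimately have "j \<in> \<alpha>" by (simp only: e1 e2)
    then show False using j dis by blast
  qed
  have dgt: "d > 1" using d0 d1 by simp
  have CP: "CHAR('a) > 0" using finite_imp_CHAR_pos[where ?'a='a] by simp
  have Cprime: "prime CHAR('a)" using prime_CHAR_semidom[OF CP] .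
  have "CHAR('a) dvd p ^ (k * n)" using CHAR_dvd_CARD[where ?'a='a] assms(3) q
    by (simp add: power_mult)
  then have "CHAR('a) dvd p" using prime_dvd_power Cprime by blast
  then have Cp: "CHAR('a) = p" using p Cprime by (simp add: primes_dvd_imp_eq)
  have frob: "\<And>(x::'a) y i. (x + y) ^ (q ^ i) = x ^ (q ^ i) + y ^ (q ^ i)"
  proof -
    fix x y :: 'a and i :: nat
    have "q ^ i = CHAR('a) ^ (k * i)" using q Cp by (simp add: power_mult)
    then show "(x + y) ^ (q ^ i) = x ^ (q ^ i) + y ^ (q ^ i)"
      using freshmans_dream'[OF Cprime] by blast
  qed
  have lin: "linear_over (subfield_qd q d) (qpoly q n a)"
    unfolding linear_over_def
  proof (intro conjI allI ballI)
    fix x y :: 'a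
    show "qpoly q n a (x + y) = qpoly q n a x + qpoly q n a y"
      unfolding qpoly_def by (simp add: frob distrib_left sum.distrib)
  next
    fix c x :: 'a assume "c \<in> subfield_qd q d"
    then have cf: "c ^ (q ^ d) = c" unfolding subfield_qd_def by simp
    have key: "\<And>i. i < n \<Longrightarrow> a i * (c * x) ^ (q ^ i) = c * (a i * x ^ (q ^ i))"
    proof -
      fix i assume i: "i < n"
      show "a i * (c * x) ^ (q ^ i) = c * (a i * x ^ (q ^ i))"
      proof (cases "a i = 0")
        case True then show ?thesis by simp
      next
        case False
        then have "i \<in> S" using i unfolding S_def by simp
        then obtain m where "i = d * m" using ddvdS by blast
        then have "c ^ (q ^ i) = c" using pow_fix[OF cf] by simp
        then show ?thesis by (simp add: power_mult_distrib)
      qed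
    qed
    show "qpoly q n a (c * x) = c * qpoly q n a x"
      unfolding qpoly_def sum_distrib_left by (rule sum.cong) (simp_all add: key)
  qed
  show ?thesis using ddvd dgt lin by blast
qed

end
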